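(* Let $(M,d)$ be a metric space and let $S$ be a semitopological semigroup which is left reversible or left amenable. Let $\{T_s:s\in S\}$ be a representation of $S$ on $M$ such that the map $S\times M\ni(s,x)\mapsto T_sx$ is jointly continuous and the family $\{T_s:s\in S\}$ is (as a semigroup under composition) generated by uniformly asymptotically regular mappings. Then every nonempty compact set $K\subset M$ with $T_s(K)\subset K$ for all $s\in S$ contains a common fixed point of all $T_s$, $s\in S$.
   Context: A semitopological semigroup is a semigroup with a Hausdorff topology making $s\mapsto ts$, $s\mapsto st$ continuous for each $t$. A representation: maps $T_s:M\to M$ with $T_{st}=T_s\circ T_t$. $S$ is left reversible if any two closed right ideals of $S$ (sets $I$ with $IS\subset I$) have nonempty intersection. $S$ is left amenable if there is a left invariant mean on $LUC(S)$: with $(l_sf)(t)=f(st)$, $LUC(S)$ is the space of bounded continuous $f$ with $s\mapsto l_sf$ norm-continuous into $C_b(S)$, and a left invariant mean is $\mu\in LUC(S)^*$ with $\|\mu\|=\mu(1)=1$ and $\mu(l_sf)=\mu(f)$. A map $T:M\to M$ is uniformly asymptotically regular if $\lim_n\sup_{x\in M}d(T^{n+1}x,T^nx)=0$. *)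

theory Defs
  imports "HOL-Analysis.Analysis"
begin

definition semitopological :: "('a::{semigroup_mult,t2_space}) itself \<Rightarrow> bool" where
  "semitopological _ \<longleftrightarrow>
     (\<forall>t::'a. continuous_on UNIV (\<lambda>s. t * s) \<and> continuous_on UNIV (\<lambda>s. s * t))"

definition right_ideal :: "('a::semigroup_mult) set \<Rightarrow> bool" where
  "right_ideal I \<longleftrightarrow> (\<forall>x\<in>I. \<forall>s. x * s \<in> I)"

definition left_reversible :: "('a::{semigroup_mult,topological_space}) itself \<Rightarrow> bool" where
  "left_reversible _ \<longleftrightarrow>
     (\<forall>I J :: 'a set. I \<noteq> {} \<and> J \<noteq> {} \<and> closed I \<and> closed J \<and> right_ideal I \<and> right_ideal J
        \<longrightarrow> I \<inter> J \<noteq> {})"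

text \<open>LUC(S): bounded continuous real functions f such that s \<mapsto> l_s f is
  continuous into C_b(S) with the sup norm, where (l_s f)(t) = f(st).\<close>
definition LUC :: "('a::{semigroup_mult,topological_space} \<Rightarrow> real) set" where
  "LUC = {f. continuous_on UNIV f \<and> bounded (range f) \<and>
      (\<forall>s0. \<forall>e>0. \<exists>U. open U \<and> s0 \<in> U \<and> (\<forall>s\<in>U. \<forall>t. \<bar>f (s * t) - f (s0 * t)\<bar> \<le> e))}"

definition left_invariant_mean ::
    "(('a::{semigroup_mult,topological_space} \<Rightarrow> real) \<Rightarrow> real) \<Rightarrow> bool" where
  "left_invariant_mean \<mu> \<longleftrightarrow>
     (\<forall>f\<in>LUC. \<forall>g\<in>LUC. \<mu> (\<lambda>t. f t + g t) = \<mu> f + \<mu> g) \<and>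
     (\<forall>f\<in>LUC. \<forall>c. \<mu> (\<lambda>t. c * f t) = c * \<mu> f) \<and>
     (\<forall>f\<in>LUC. \<bar>\<mu> f\<bar> \<le> (SUP t. \<bar>f t\<bar>)) \<and>
     \<mu> (\<lambda>t. 1) = 1 \<and>
     (\<forall>f\<in>LUC. \<forall>s. \<mu> (\<lambda>t. f (s * t)) = \<mu> f)"

definition left_amenable :: "('a::{semigroup_mult,topological_space}) itself \<Rightarrow> bool" where
  "left_amenable _ \<longleftrightarrow> (\<exists>\<mu> :: ('a \<Rightarrow> real) \<Rightarrow> real. left_invariant_mean \<mu>)"

definition unif_asymp_regular :: "('b::metric_space \<Rightarrow> 'b) \<Rightarrow> bool" where
  "unif_asymp_regular T \<longleftrightarrow>
     (\<forall>e>0. \<exists>N. \<forall>n\<ge>N. \<forall>x. dist ((T ^^ Suc n) x) ((T ^^ n) x) \<le> e)"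

inductive_set gen_semigroup :: "('b \<Rightarrow> 'b) set \<Rightarrow> ('b \<Rightarrow> 'b) set" for G where
  gen: "g \<in> G \<Longrightarrow> g \<in> gen_semigroup G"
| comp: "f \<in> gen_semigroup G \<Longrightarrow> g \<in> gen_semigroup G \<Longrightarrow> f \<circ> g \<in> gen_semigroup G"

end

theory Submission imports Defs begin

lemma gen_pow: "g \<in> gen_semigroup G \<Longrightarrow> g ^^ Suc n \<in> gen_semigroup G"
proof (induction n)
  case 0 then show ?case by simp
next
  case (Suc n)
  have "g ^^ Suc (Suc n) = g \<circ> g ^^ Suc n" by (simp only: funpow.simps)
  then show ?case using Suc gen_semigroup.comp by metis
qed

lemma gen_fix: "f \<in> gen_semigroup G \<Longrightarrow> (\<forall>g\<in>G. g y = y) \<Longrightarrow> f y = y"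
  by (induction rule: gen_semigroup.induct) auto

lemma uar_fix:
  fixes g :: "'b::metric_space \<Rightarrow> 'b"
  assumes "unif_asymp_regular g" "\<And>n. \<exists>z. y = (g ^^ Suc n) z"
  shows "g y = y"
proof -
  have "dist (g y) y \<le> 0 + e" if "e > 0" for e
  proof -
    obtain N where N: "\<forall>n\<ge>N. \<forall>x. dist ((g ^^ Suc n) x) ((g ^^ n) x) \<le> e"
      using assms(1) \<open>e>0\<close> unfolding unif_asymp_regular_def by blast
    obtain z where z: "y = (g ^^ Suc N) z" using assms(2) by blast
    have "g y = (g ^^ Suc (Suc N)) z" using z by simp
    moreover have "dist ((g ^^ Suc (Suc N)) z) ((g ^^ Suc N) z) \<le> e"
      using N by (meson le_SucI order_refl)
    ultimately show ?thesis using z by simp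
  qed
  then have "dist (g y) y \<le> 0" by (rule field_le_epsilon)
  then show ?thesis by simp
qed

lemma bounded_range_of: "(\<And>t. \<bar>h t\<bar> \<le> (B::real)) \<Longrightarrow> bounded (range h)"
  unfolding bounded_iff by (intro exI[of _ B]) auto

lemma LUC_bound: "f \<in> LUC \<Longrightarrow> \<exists>B. \<forall>t. \<bar>f t\<bar> \<le> B"
  unfolding LUC_def bounded_iff by auto

lemma LUC_add: "f \<in> LUC \<Longrightarrow> g \<in> LUC \<Longrightarrow> (\<lambda>t. f t + g t) \<in> LUC"
proof -
  assume f: "f \<in> LUC" and g: "g \<in> LUC"
  have c: "continuous_on UNIV (\<lambda>t. f t + g t)"
    using f g unfolding LUC_def by (auto intro: continuous_on_add)
  obtain Bf where Bf: "\<forall>t. \<bar>f t\<bar> \<le> Bf" using LUC_bound[OF f] by blast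
  obtain Bg where Bg: "\<forall>t. \<bar>g t\<bar> \<le> Bg" using LUC_bound[OF g] by blast
  have "\<bar>f t + g t\<bar> \<le> Bf + Bg" for t
    using Bf[rule_format, of t] Bg[rule_format, of t] abs_triangle_ineq[of "f t" "g t"] by linarith
  then have b: "bounded (range (\<lambda>t. f t + g t))" by (rule bounded_range_of)
  have u: "\<exists>U. open U \<and> s0 \<in> U \<and> (\<forall>s\<in>U. \<forall>t. \<bar>(f (s*t) + g (s*t)) - (f (s0*t) + g (s0*t))\<bar> \<le> e)"
    if "e > 0" for s0 e
  proof -
    have e2: "e/2 > 0" using that by simp
    obtain U where U: "open U" "s0 \<in> U" "\<forall>s\<in>U. \<forall>t. \<bar>f (s * t) - f (s0 * t)\<bar> \<le> e/2"
      using f e2 unfolding LUC_def by blast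
    obtain V where V: "open V" "s0 \<in> V" "\<forall>s\<in>V. \<forall>t. \<bar>g (s * t) - g (s0 * t)\<bar> \<le> e/2"
      using g e2 unfolding LUC_def by blast
    have "\<forall>s\<in>U \<inter> V. \<forall>t. \<bar>(f (s*t) + g (s*t)) - (f (s0*t) + g (s0*t))\<bar> \<le> e"
    proof (intro ballI allI)
      fix s t assume "s \<in> U \<inter> V"
      then have "\<bar>f (s * t) - f (s0 * t)\<bar> \<le> e/2" "\<bar>g (s * t) - g (s0 * t)\<bar> \<le> e/2" using U V by auto
      then show "\<bar>(f (s*t) + g (s*t)) - (f (s0*t) + g (s0*t))\<bar> \<le> e" by linarith
    qed
    moreover have "open (U \<inter> V)" "s0 \<in> U \<inter> V" using U V by auto
    ultimately show ?thesis by blast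
  qed
  show ?thesis unfolding LUC_def using c b u by simp
qed

lemma LUC_const: "(\<lambda>t. c) \<in> LUC"
proof -
  have "bounded (range (\<lambda>t::'a. c))" by (rule bounded_range_of[of _ "\<bar>c\<bar>"]) simp
  moreover have "\<exists>U. open U \<and> s0 \<in> U \<and> (\<forall>s\<in>U. \<forall>t. \<bar>c - c\<bar> \<le> e)" if "e > 0" for s0 :: 'a and e :: real
    using that by (intro exI[of _ "UNIV::'a set"]) simp
  ultimately show ?thesis unfolding LUC_def by simp
qed

lemma LUC_scale: "f \<in> LUC \<Longrightarrow> (\<lambda>t. c * f t) \<in> LUC"
proof -
  assume f: "f \<in> LUC"
  have c: "continuous_on UNIV (\<lambda>t. c * f t)"
    using f unfolding LUC_def by (auto intro: continuous_on_mult)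
  obtain Bf where Bf: "\<forall>t. \<bar>f t\<bar> \<le> Bf" using LUC_bound[OF f] by blast
  have "\<bar>c * f t\<bar> \<le> \<bar>c\<bar> * Bf" for t
    unfolding abs_mult using Bf by (simp add: mult_left_mono)
  then have b: "bounded (range (\<lambda>t. c * f t))" by (rule bounded_range_of)
  have u: "\<exists>U. open U \<and> s0 \<in> U \<and> (\<forall>s\<in>U. \<forall>t. \<bar>c * f (s*t) - c * f (s0*t)\<bar> \<le> e)"
    if "e > 0" for s0 e
  proof -
    have "e / (\<bar>c\<bar>+1) > 0" using \<open>e>0\<close> by (simp add: add_pos_nonneg)
    then obtain U where U: "open U" "s0 \<in> U" "\<forall>s\<in>U. \<forall>t. \<bar>f (s * t) - f (s0 * t)\<bar> \<le> e / (\<bar>c\<bar>+1)"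
      using f unfolding LUC_def by blast
    have "\<forall>s\<in>U. \<forall>t. \<bar>c * f (s*t) - c * f (s0*t)\<bar> \<le> e"
    proof (intro ballI allI)
      fix s t assume "s \<in> U"
      then have h: "\<bar>f (s * t) - f (s0 * t)\<bar> \<le> e / (\<bar>c\<bar>+1)" using U by auto
      have "\<bar>c * f (s*t) - c * f (s0*t)\<bar> = \<bar>c\<bar> * \<bar>f (s * t) - f (s0 * t)\<bar>"
        by (simp add: abs_mult right_diff_distrib[symmetric])
      also have "\<dots> \<le> (\<bar>c\<bar>+1) * (e / (\<bar>c\<bar>+1))"
        using h by (intro mult_mono) auto
      also have "\<dots> = e" by (simp add: add_pos_nonneg)
      finally show "\<bar>c * f (s*t) - c * f (s0*t)\<bar> \<le> e" .
    qed
    then show ?thesis using U by blast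
  qed
  show ?thesis unfolding LUC_def using c b u by simp
qed

lemma rev_fip:
  fixes T :: "'a::{semigroup_mult,t2_space} \<Rightarrow> 'b::metric_space \<Rightarrow> 'b"
  assumes semitop: "semitopological TYPE('a)"
    and rev: "left_reversible TYPE('a)"
    and repr: "\<And>s t. T (s * t) = T s \<circ> T t"
    and contS: "\<And>y. continuous_on UNIV (\<lambda>s. T s y)"
    and cl: "\<And>s. closed (T s ` K)"
    and K: "\<And>s. T s ` K \<subseteq> K"
    and F: "finite F"
  shows "\<exists>w. \<forall>s\<in>F. T w ` K \<subseteq> T s ` K"
proof -
  have sub: "T r ` K \<subseteq> T s ` K" if r: "r \<in> closure (range ((*) s))" for r s
  proof
    fix x assume "x \<in> T r ` K"
    then obtain y where y: "y \<in> K" "x = T r y" by auto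
    have "(\<lambda>r. T r y) ` closure (range ((*) s)) \<subseteq> T s ` K"
    proof (rule image_closure_subset)
      show "continuous_on (closure (range ((*) s))) (\<lambda>r. T r y)"
        by (rule continuous_on_subset[OF contS]) simp
      show "closed (T s ` K)" by (rule cl)
      show "(\<lambda>r. T r y) ` range ((*) s) \<subseteq> T s ` K"
      proof
        fix z assume "z \<in> (\<lambda>r. T r y) ` range ((*) s)"
        then obtain u where u: "z = T (s * u) y" by auto
        have "T u y \<in> K" using K y(1) by blast
        then show "z \<in> T s ` K" unfolding u repr comp_def by (rule imageI)
      qed
    qed
    then show "x \<in> T s ` K" using r y(2) by (simp add: image_subset_iff)
  qed
  have ri: "right_ideal (closure (range ((*) w)))" for w :: 'a
    unfolding right_ideal_def
  proof (intro ballI allI)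
    fix x s assume x: "x \<in> closure (range ((*) w))"
    have "(\<lambda>r. r * s) ` closure (range ((*) w)) \<subseteq> closure (range ((*) w))"
    proof (rule image_closure_subset)
      have "continuous_on UNIV (\<lambda>r. r * s)"
        using semitop unfolding semitopological_def by simp
      then show "continuous_on (closure (range ((*) w))) (\<lambda>r. r * s)"
        by (rule continuous_on_subset) simp
      show "(\<lambda>r. r * s) ` range ((*) w) \<subseteq> closure (range ((*) w))"
      proof
        fix z assume "z \<in> (\<lambda>r. r * s) ` range ((*) w)"
        then obtain u where "z = w * u * s" by auto
        then have "z = w * (u * s)" by (simp add: mult.assoc)
        then have "z \<in> range ((*) w)" by simp
        then show "z \<in> closure (range ((*) w))" using closure_subset by (rule subsetD[rotated])
      qed
    qed simp
    then show "x * s \<in> closure (range ((*) w))" using x by (simp add: image_subset_iff)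
  qed
  have ne: "closure (range ((*) w)) \<noteq> {}" for w :: 'a by simp
  have pair: "\<exists>w'. T w' ` K \<subseteq> T w ` K \<and> T w' ` K \<subseteq> T s ` K" for w s
  proof -
    have "closure (range ((*) w)) \<inter> closure (range ((*) s)) \<noteq> {}"
      using rev[unfolded left_reversible_def, rule_format, of "closure (range ((*) w))" "closure (range ((*) s))"]
      by (simp only: ri ne closed_closure simp_thms)
    then obtain r where r: "r \<in> closure (range ((*) w))" "r \<in> closure (range ((*) s))" by blast
    show ?thesis by (intro exI[of _ r] conjI sub r)
  qed
  from F show ?thesis
  proof (induction F rule: finite_induct)
    case empty then show ?case by simp
  next
    case (insert s F)
    then obtain w where w: "\<forall>s\<in>F. T w ` K \<subseteq> T s ` K" by blast
    obtain w' where w': "T w' ` K \<subseteq> T w ` K" "T w' ` K \<subseteq> T s ` K" using pair by blast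
    have "\<forall>s'\<in>insert s F. T w' ` K \<subseteq> T s' ` K"
    proof (intro ballI)
      fix s' assume s': "s' \<in> insert s F"
      show "T w' ` K \<subseteq> T s' ` K"
      proof (cases "s' = s")
        case True then show ?thesis using w'(2) by simp
      next
        case False
        then have "T w ` K \<subseteq> T s' ` K" using w s' by blast
        then show ?thesis using w'(1) by (rule order_trans[rotated])
      qed
    qed
    then show ?case by (rule exI)
  qed
qed


lemma amen_fip:
  fixes T :: "'a::{semigroup_mult,t2_space} \<Rightarrow> 'b::metric_space \<Rightarrow> 'b"
    and \<mu> :: "('a \<Rightarrow> real) \<Rightarrow> real"
  assumes mu: "left_invariant_mean \<mu>"
    and repr: "\<And>s t. T (s * t) = T s \<circ> T t"
    and joint: "continuous_on UNIV (\<lambda>(s, x). T s x)"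
    and contS: "\<And>y. continuous_on UNIV (\<lambda>s. T s y)"
    and cl: "\<And>s. closed (T s ` K)"
    and Kc: "compact K" and Kne: "K \<noteq> {}" and K: "\<And>s. T s ` K \<subseteq> K"
    and F: "finite F"
  shows "K \<inter> \<Inter>((\<lambda>s. T s ` K) ` F) \<noteq> {}"
proof
  assume empty: "K \<inter> \<Inter>((\<lambda>s. T s ` K) ` F) = {}"
  obtain x0 where x0: "x0 \<in> K" using Kne by blast
  have TK: "T t y \<in> K" if "y \<in> K" for t y using K that by blast
  have Tne: "T s ` K \<noteq> {}" for s using Kne by simp
  define f where "f s t = infdist (T t x0) (T s ` K)" for s t
  have mu_add: "\<And>f g. f \<in> LUC \<Longrightarrow> g \<in> LUC \<Longrightarrow> \<mu> (\<lambda>t. f t + g t) = \<mu> f + \<mu> g"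
    and mu_scale: "\<And>f c. f \<in> LUC \<Longrightarrow> \<mu> (\<lambda>t. c * f t) = c * \<mu> f"
    and mu_bound: "\<And>f. f \<in> LUC \<Longrightarrow> \<bar>\<mu> f\<bar> \<le> (SUP t. \<bar>f t\<bar>)"
    and mu_one: "\<mu> (\<lambda>t. 1) = 1"
    and mu_inv: "\<And>f s. f \<in> LUC \<Longrightarrow> \<mu> (\<lambda>t. f (s * t)) = \<mu> f"
    using mu unfolding left_invariant_mean_def by auto
  have mu0: "\<mu> (\<lambda>t::'a. 0) = 0"
  proof -
    have "\<mu> (\<lambda>t::'a. 0 * (\<lambda>t. 1) t) = 0 * \<mu> (\<lambda>t. 1)"
      by (rule mu_scale[OF LUC_const])
    then show ?thesis by simp
  qed
  have jointK: "continuous_on (UNIV \<times> K) (\<lambda>(s, x). T s x)"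
    by (rule continuous_on_subset[OF joint]) simp
  have fLUC: "f s \<in> LUC" for s
  proof -
    have c: "continuous_on UNIV (f s)"
      unfolding f_def by (intro continuous_on_infdist contS)
    have "\<bar>f s t\<bar> \<le> diameter K" for t
    proof -
      have "\<bar>f s t\<bar> = infdist (T t x0) (T s ` K)" unfolding f_def by (simp add: infdist_nonneg)
      also have "\<dots> \<le> dist (T t x0) (T s x0)" by (rule infdist_le) (use x0 in simp)
      also have "\<dots> \<le> diameter K"
        by (rule diameter_bounded_bound) (use Kc compact_imp_bounded x0 TK in auto)
      finally show ?thesis .
    qed
    then have b: "bounded (range (f s))" by (rule bounded_range_of)
    have u: "\<exists>U. open U \<and> s0 \<in> U \<and> (\<forall>s'\<in>U. \<forall>t. \<bar>f s (s' * t) - f s (s0 * t)\<bar> \<le> e)"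
      if "e > 0" for s0 e
    proof -
      obtain X0 where X0: "s0 \<in> X0" "open X0"
        "\<forall>x\<in>X0 \<inter> UNIV. \<forall>t\<in>K. dist ((\<lambda>(s, x). T s x) (x, t)) ((\<lambda>(s, x). T s x) (s0, t)) \<le> e"
        using continuous_on_prod_compactE[OF jointK Kc UNIV_I \<open>e > 0\<close>] by blast
      have "\<forall>s'\<in>X0. \<forall>t. \<bar>f s (s' * t) - f s (s0 * t)\<bar> \<le> e"
      proof (intro ballI allI)
        fix s' t assume s': "s' \<in> X0"
        have "\<bar>f s (s' * t) - f s (s0 * t)\<bar> \<le> dist (T s' (T t x0)) (T s0 (T t x0))"
          unfolding f_def repr comp_def by (rule infdist_triangle_abs)
        also have "\<dots> \<le> e" using X0(3) s' TK[OF x0] by auto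
        finally show "\<bar>f s (s' * t) - f s (s0 * t)\<bar> \<le> e" .
      qed
      then show ?thesis using X0(1,2) by blast
    qed
    show ?thesis unfolding LUC_def using c b u by simp
  qed
  have fmu: "\<mu> (f s) = 0" for s
  proof -
    have "(\<lambda>t. f s (s * t)) = (\<lambda>t. 0)"
      unfolding f_def repr comp_def using TK[OF x0] by (intro ext infdist_zero imageI)
    then show ?thesis using mu_inv[OF fLUC, of s s] mu0 by simp
  qed
  have sumF: "(\<lambda>t. \<Sum>s\<in>F'. f s t) \<in> LUC \<and> \<mu> (\<lambda>t. \<Sum>s\<in>F'. f s t) = 0" if "finite F'" for F'
    using that
  proof (induction F' rule: finite_induct)
    case empty then show ?case using LUC_const[of 0] mu0 by simp
  next
    case (insert s F')
    have eq: "(\<lambda>t. \<Sum>s\<in>insert s F'. f s t) = (\<lambda>t. f s t + (\<lambda>t. \<Sum>s\<in>F'. f s t) t)"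
      using insert(1,2) by simp
    have Fl: "(\<lambda>t. \<Sum>s\<in>F'. f s t) \<in> LUC" and Fm: "\<mu> (\<lambda>t. \<Sum>s\<in>F'. f s t) = 0"
      using insert(3) by auto
    show ?case unfolding eq
      using LUC_add[OF fLUC[of s] Fl] mu_add[OF fLUC[of s] Fl] Fm fmu[of s] by simp
  qed
  define g where "g t = (\<Sum>s\<in>F. f s t)" for t
  have gLUC: "g \<in> LUC" and gmu: "\<mu> g = 0"
    using sumF[OF F] unfolding g_def[abs_def] by auto
  define phi where "phi y = (\<Sum>s\<in>F. infdist y (T s ` K))" for y
  have phipos: "phi y > 0" if y: "y \<in> K" for y
  proof -
    obtain s where s: "s \<in> F" "y \<notin> T s ` K" using empty y by blast
    show ?thesis unfolding phi_def
      by (rule sum_pos2[OF F s(1)]) (simp_all add: infdist_pos_not_in_closed[OF cl Tne s(2)] infdist_nonneg)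
  qed
  have phicont: "continuous_on K phi"
    unfolding phi_def by (intro continuous_on_sum continuous_on_infdist continuous_on_id)
  obtain ym where ym: "ym \<in> K" "\<And>y. y \<in> K \<Longrightarrow> phi ym \<le> phi y"
    using continuous_attains_inf[OF Kc Kne phicont] by blast
  define \<delta> where "\<delta> = phi ym"
  have dpos: "\<delta> > 0" unfolding \<delta>_def using phipos ym(1) by simp
  have gd: "g t \<ge> \<delta>" for t
  proof -
    have "g t = phi (T t x0)" unfolding g_def phi_def f_def by simp
    then show ?thesis unfolding \<delta>_def using ym(2) TK[OF x0] by simp
  qed
  obtain B where B: "\<forall>t. \<bar>g t\<bar> \<le> B" using LUC_bound[OF gLUC] by blast
  define h where "h t = (\<lambda>t. B * (\<lambda>t. 1) t) t + (\<lambda>t. (-1) * g t) t" for t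
  have l1: "(\<lambda>t. B * (\<lambda>t. 1::real) t) \<in> LUC" by (rule LUC_scale[OF LUC_const])
  have l2: "(\<lambda>t. (-1) * g t) \<in> LUC" by (rule LUC_scale[OF gLUC])
  have hLUC: "h \<in> LUC" unfolding h_def[abs_def] by (rule LUC_add[OF l1 l2])
  have "\<mu> h = \<mu> (\<lambda>t. B * (\<lambda>t. 1) t) + \<mu> (\<lambda>t. (-1) * g t)"
    unfolding h_def[abs_def] by (rule mu_add[OF l1 l2])
  also have "\<dots> = B"
    using mu_scale[OF LUC_const, of B 1] mu_scale[OF gLUC, of "-1"] mu_one gmu by simp
  finally have muh: "\<mu> h = B" .
  have "(SUP t. \<bar>h t\<bar>) \<le> B - \<delta>"
  proof (rule cSUP_least)
    fix t
    have "g t \<le> B" using B[rule_format, of t] by linarith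
    then show "\<bar>h t\<bar> \<le> B - \<delta>" unfolding h_def using gd[of t] dpos by simp
  qed simp
  then have "\<bar>B\<bar> \<le> B - \<delta>" using mu_bound[OF hLUC] muh by simp
  then show False using dpos by linarith
qed

theorem lemma3p13:
  fixes T :: "'a::{semigroup_mult,t2_space} \<Rightarrow> 'b::metric_space \<Rightarrow> 'b"
    and K :: "'b set"
  assumes semitop: "semitopological TYPE('a)"
    and rev_or_amen: "left_reversible TYPE('a) \<or> left_amenable TYPE('a)"
    and repr: "\<And>s t. T (s * t) = T s \<circ> T t"
    and joint: "continuous_on UNIV (\<lambda>(s, x). T s x)"
    and generated: "\<exists>G. (\<forall>g\<in>G. unif_asymp_regular g) \<and> range T = gen_semigroup G"
    and K: "compact K" "K \<noteq> {}" "\<And>s. T s ` K \<subseteq> K"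
  shows "\<exists>x\<in>K. \<forall>s. T s x = x"
proof -
  have contT: "continuous_on UNIV (T s)" for s
  proof -
    have "continuous_on UNIV (\<lambda>x. (\<lambda>(s, x). T s x) (s, x))"
      by (rule continuous_on_compose2[OF joint]) (auto intro: continuous_intros)
    then show ?thesis by simp
  qed
  have contS: "continuous_on UNIV (\<lambda>s. T s y)" for y
  proof -
    have "continuous_on UNIV (\<lambda>s. (\<lambda>(s, x). T s x) (s, y))"
      by (rule continuous_on_compose2[OF joint]) (auto intro: continuous_intros)
    then show ?thesis by simp
  qed
  have cl: "closed (T s ` K)" for s
    by (rule compact_imp_closed, rule compact_continuous_image[OF continuous_on_subset[OF contT] K(1)]) simp
  have fin: "K \<inter> \<Inter>((\<lambda>s. T s ` K) ` F) \<noteq> {}" if F: "finite F" for F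
    using rev_or_amen
  proof
    assume rev: "left_reversible TYPE('a)"
    obtain w where w: "\<forall>s\<in>F. T w ` K \<subseteq> T s ` K"
      using rev_fip[OF semitop rev repr contS cl K(3) F] by blast
    have "T w ` K \<subseteq> K \<inter> \<Inter>((\<lambda>s. T s ` K) ` F)" using w K(3) by (simp add: le_INF_iff)
    moreover have "T w ` K \<noteq> {}" using K(2) by simp
    ultimately show ?thesis by blast
  next
    assume "left_amenable TYPE('a)"
    then obtain \<mu> :: "('a \<Rightarrow> real) \<Rightarrow> real" where mu: "left_invariant_mean \<mu>"
      unfolding left_amenable_def by blast
    show ?thesis by (rule amen_fip[OF mu repr joint contS cl K F])
  qed
  have "K \<inter> \<Inter>(range (\<lambda>s. T s ` K)) \<noteq> {}"
  proof -
    show ?thesis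
    proof (rule compact_fip[THEN iffD1, OF K(1), rule_format])
      fix a assume "a \<in> range (\<lambda>s. T s ` K)"
      then show "closed a" using cl by auto
    next
      fix B assume "B \<subseteq> range (\<lambda>s. T s ` K)" "finite B"
      then obtain F where "finite F" "B = (\<lambda>s. T s ` K) ` F"
        using finite_subset_image by metis
      then show "K \<inter> \<Inter>B \<noteq> {}" using fin by simp
    qed
  qed
  then obtain y where y: "y \<in> K" "\<And>s. y \<in> T s ` K" by blast
  obtain G where G: "\<forall>g\<in>G. unif_asymp_regular g" "range T = gen_semigroup G"
    using generated by blast
  have gfix: "\<forall>g\<in>G. g y = y"
  proof
    fix g assume g: "g \<in> G"
    show "g y = y"
    proof (rule uar_fix)
      show "unif_asymp_regular g" using G(1) g by blast
      fix n
      have "g ^^ Suc n \<in> gen_semigroup G" by (rule gen_pow[OF gen_semigroup.gen[OF g]])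
      then have "g ^^ Suc n \<in> range T" using G(2) by simp
      then obtain t where t: "g ^^ Suc n = T t" by auto
      obtain z where "z \<in> K" "y = T t z" using y(2)[of t] by blast
      then show "\<exists>z. y = (g ^^ Suc n) z" using t by auto
    qed
  qed
  have "T s y = y" for s
  proof -
    have "T s \<in> range T" by simp
    then have "T s \<in> gen_semigroup G" using G(2) by simp
    then show ?thesis by (rule gen_fix[OF _ gfix])
  qed
  then show ?thesis using y(1) by blast
qed

end
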